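(* Let $(G,k,M^*,M)$ be a critical tuple and fix an edge $e\in E^+(C^+)$. If $e\notin r_b(C_e)$, then there exists a set $\mathcal{Q}$ of forward jumps of $C_e$ such that $C^+=\bigcup_{Q\in\mathcal{Q}} r(Q)\cup\bigcup_{P\in\mathcal{I}_e}P$ and no $Q\in\mathcal{Q}$ satisfies $e\in r(Q)$.
   Context: $R(H)$ is the set of red edges of an edge set $H$. For a perfect matching $M$ of a red/blue edge-colored bipartite graph $G=(A\sqcup B,E)$, $G_M$ is the directed graph on $A\sqcup B$ with edges of $M$ oriented from $A$ to $B$ and other edges from $B$ to $A$, weighted by $w_M(e)=0$ for blue $e$, $-1$ for red $e\in M$, $+1$ for red $e\notin M$; $E^+(H)$ (resp. $E^-(H)$) is the set of red edges of $H$ not in $M$ (resp. in $M$), $w_M(H)=|E^+(H)|-|E^-(H)|$. Paths and cycles are directed and identified with edge sets. For an edge $e$, $M^e$ is a perfect matching containing $e$ with the minimum number of red edges among those containing $e$. A tuple $(G,k,M^*,M)$ is critical if: every edge of $G$ lies in some perfect matching; $|R(M^* )|=k$; $|R(M)|<\frac13k$; every directed cycle $C$ of $G_M$ with $w_M(C)>0$ has $|E^+(C)|>\frac23k$; and $|R(M^e)|<\frac13k$ for every red $e\in M^*\setminus M$. $C^+$ is the unique positive-weight directed cycle of $G_M$ contained in $M\Delta M^*$. For $e\in E^+(C^+)$, $C_e$ is the unique directed cycle of $G_M$ in $M\Delta M^e$ containing $e$. A jump of $C_e$ is a sub-path $Q$ of $C_e$ with endpoints on $C^+$, no inner vertex on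 $C^+$ and $Q\cap C^+=\emptyset$; interjumps are the sub-paths of $C_e$ contained in $C^+$ between consecutive jumps, and $\mathcal{I}_e$ is the set of interjumps of $C_e$. For a jump $Q$, $C_Q$ is the unique directed cycle in $C^+\cup Q$ containing $Q$; $Q$ is forward if $w_M(C_Q)>0$, backward otherwise; reach $r(Q)=C^+\setminus C_Q$ if forward, $r(Q)=C_Q\setminus Q$ if backward. $r_b(C_e)$ is the union of the reaches of all backward jumps of $C_e$. *)

theory Defs
  imports Main
begin

(* Bipartite graph G = (A \<union> B, E), edges (a,b) with a \<in> A, b \<in> B;
   R \<subseteq> E is the set of red edges (the others are blue). *)

type_synonym 'v edge = "'v \<times> 'v"

definition bip_graph :: "'v set \<Rightarrow> 'v set \<Rightarrow> 'v edge set \<Rightarrow> 'v edge set \<Rightarrow> bool" where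
  "bip_graph A B E R \<longleftrightarrow> finite A \<and> finite B \<and> A \<inter> B = {} \<and> E \<subseteq> A \<times> B \<and> R \<subseteq> E"

definition perfect_matching :: "'v set \<Rightarrow> 'v set \<Rightarrow> 'v edge set \<Rightarrow> 'v edge set \<Rightarrow> bool" where
  "perfect_matching A B E M \<longleftrightarrow> M \<subseteq> E \<and>
     (\<forall>v \<in> A \<union> B. \<exists>!x. x \<in> M \<and> (v = fst x \<or> v = snd x))"

definition red :: "'v edge set \<Rightarrow> 'v edge set \<Rightarrow> 'v edge set" where
  "red R H = H \<inter> R"

definition is_min_red_pm :: "'v set \<Rightarrow> 'v set \<Rightarrow> 'v edge set \<Rightarrow> 'v edge set \<Rightarrow> 'v edge \<Rightarrow> 'v edge set \<Rightarrow> bool" where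
  "is_min_red_pm A B E R e N \<longleftrightarrow> perfect_matching A B E N \<and> e \<in> N \<and>
     (\<forall>N'. perfect_matching A B E N' \<and> e \<in> N' \<longrightarrow> card (red R N) \<le> card (red R N'))"

definition arcs :: "'v edge set \<Rightarrow> 'v edge set \<Rightarrow> ('v \<times> 'v) set" where
  "arcs E M = M \<union> {(b, a) | a b. (a, b) \<in> E \<and> (a, b) \<notin> M}"

definition edge_of :: "'v edge set \<Rightarrow> 'v \<Rightarrow> 'v \<Rightarrow> 'v edge" where
  "edge_of E u w = (if (u, w) \<in> E then (u, w) else (w, u))"

definition Eplus :: "'v edge set \<Rightarrow> 'v edge set \<Rightarrow> 'v edge set \<Rightarrow> 'v edge set" where
  "Eplus R M H = (H \<inter> R) - M"

definition Eminus :: "'v edge set \<Rightarrow> 'v edge set \<Rightarrow> 'v edge set \<Rightarrow> 'v edge set" where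
  "Eminus R M H = (H \<inter> R) \<inter> M"

definition wM :: "'v edge set \<Rightarrow> 'v edge set \<Rightarrow> 'v edge set \<Rightarrow> int" where
  "wM R M H = int (card (Eplus R M H)) - int (card (Eminus R M H))"

definition dpath :: "'v edge set \<Rightarrow> 'v edge set \<Rightarrow> 'v list \<Rightarrow> bool" where
  "dpath E M vs \<longleftrightarrow> vs \<noteq> [] \<and> distinct vs \<and>
     (\<forall>i. i + 1 < length vs \<longrightarrow> (vs ! i, vs ! (i + 1)) \<in> arcs E M)"

definition path_edges :: "'v edge set \<Rightarrow> 'v list \<Rightarrow> 'v edge set" where
  "path_edges E vs = {edge_of E (vs ! i) (vs ! (i + 1)) | i. i + 1 < length vs}"

definition dcycle :: "'v edge set \<Rightarrow> 'v edge set \<Rightarrow> 'v list \<Rightarrow> bool" where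
  "dcycle E M vs \<longleftrightarrow> length vs \<ge> 2 \<and> distinct vs \<and>
     (\<forall>i < length vs. (vs ! i, vs ! ((i + 1) mod length vs)) \<in> arcs E M)"

definition cycle_edges :: "'v edge set \<Rightarrow> 'v list \<Rightarrow> 'v edge set" where
  "cycle_edges E vs = {edge_of E (vs ! i) (vs ! ((i + 1) mod length vs)) | i. i < length vs}"

definition is_dcycle :: "'v edge set \<Rightarrow> 'v edge set \<Rightarrow> 'v edge set \<Rightarrow> bool" where
  "is_dcycle E M C \<longleftrightarrow> (\<exists>vs. dcycle E M vs \<and> C = cycle_edges E vs)"

definition verts :: "'v edge set \<Rightarrow> 'v set" where
  "verts H = fst ` H \<union> snd ` H"

definition symdiff :: "'a set \<Rightarrow> 'a set \<Rightarrow> 'a set" where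
  "symdiff X Y = (X - Y) \<union> (Y - X)"

(* critical tuple (G,k,M^*,M), with M^e given by the choice function Me *)
definition critical ::
  "'v set \<Rightarrow> 'v set \<Rightarrow> 'v edge set \<Rightarrow> 'v edge set \<Rightarrow> nat \<Rightarrow> 'v edge set \<Rightarrow> 'v edge set
   \<Rightarrow> ('v edge \<Rightarrow> 'v edge set) \<Rightarrow> bool" where
  "critical A B E R k Mstar M Me \<longleftrightarrow>
     bip_graph A B E R \<and> perfect_matching A B E Mstar \<and> perfect_matching A B E M \<and>
     (\<forall>e \<in> E. \<exists>N. perfect_matching A B E N \<and> e \<in> N) \<and>
     card (red R Mstar) = k \<and>
     3 * card (red R M) < k \<and>
     (\<forall>C. is_dcycle E M C \<and> wM R M C > 0 \<longrightarrow> 3 * card (Eplus R M C) > 2 * k) \<and>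
     (\<forall>e \<in> red R (Mstar - M). 3 * card (red R (Me e)) < k)"

definition Cplus :: "'v edge set \<Rightarrow> 'v edge set \<Rightarrow> 'v edge set \<Rightarrow> 'v edge set \<Rightarrow> 'v edge set" where
  "Cplus E R M Mstar = (THE C. is_dcycle E M C \<and> C \<subseteq> symdiff M Mstar \<and> wM R M C > 0)"

definition Ce :: "'v edge set \<Rightarrow> 'v edge set \<Rightarrow> ('v edge \<Rightarrow> 'v edge set) \<Rightarrow> 'v edge \<Rightarrow> 'v edge set" where
  "Ce E M Me e = (THE C. is_dcycle E M C \<and> C \<subseteq> symdiff M (Me e) \<and> e \<in> C)"

definition is_jump :: "'v edge set \<Rightarrow> 'v edge set \<Rightarrow> 'v edge set \<Rightarrow> 'v edge set \<Rightarrow> 'v edge set \<Rightarrow> bool" where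
  "is_jump E M Cp C Q \<longleftrightarrow> (\<exists>vs. dpath E M vs \<and> length vs \<ge> 2 \<and> Q = path_edges E vs \<and> Q \<subseteq> C \<and>
      hd vs \<in> verts Cp \<and> last vs \<in> verts Cp \<and> set (butlast (tl vs)) \<inter> verts Cp = {} \<and>
      Q \<inter> Cp = {})"

(* interjumps: the (maximal) sub-paths of C contained in Cp, i.e. the pieces of C
   between consecutive jumps *)
definition interjumps :: "'v edge set \<Rightarrow> 'v edge set \<Rightarrow> 'v edge set \<Rightarrow> 'v edge set \<Rightarrow> 'v edge set set" where
  "interjumps E M Cp C = {P. (\<exists>vs. dpath E M vs \<and> P = path_edges E vs) \<and> P \<subseteq> C \<inter> Cp \<and>
      \<not> (\<exists>ws. dpath E M ws \<and> path_edges E ws \<subseteq> C \<inter> Cp \<and> P \<subset> path_edges E ws)}"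

definition CQ :: "'v edge set \<Rightarrow> 'v edge set \<Rightarrow> 'v edge set \<Rightarrow> 'v edge set \<Rightarrow> 'v edge set" where
  "CQ E M Cp Q = (THE C. is_dcycle E M C \<and> C \<subseteq> Cp \<union> Q \<and> Q \<subseteq> C)"

definition forward_jump :: "'v edge set \<Rightarrow> 'v edge set \<Rightarrow> 'v edge set \<Rightarrow> 'v edge set \<Rightarrow> 'v edge set \<Rightarrow> bool" where
  "forward_jump E R M Cp Q \<longleftrightarrow> wM R M (CQ E M Cp Q) > 0"

definition reach :: "'v edge set \<Rightarrow> 'v edge set \<Rightarrow> 'v edge set \<Rightarrow> 'v edge set \<Rightarrow> 'v edge set \<Rightarrow> 'v edge set" where
  "reach E R M Cp Q = (if forward_jump E R M Cp Q then Cp - CQ E M Cp Q else CQ E M Cp Q - Q)"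

definition reach_back :: "'v edge set \<Rightarrow> 'v edge set \<Rightarrow> 'v edge set \<Rightarrow> 'v edge set \<Rightarrow> 'v edge set \<Rightarrow> 'v edge set" where
  "reach_back E R M Cp C = \<Union> {reach E R M Cp Q | Q. is_jump E M Cp C Q \<and> \<not> forward_jump E R M Cp Q}"

end

theory Submission
  imports Defs
begin


lemma cyc_nth_funpow:
  assumes nx: "\<forall>i<length zs. zs!((i+1) mod length zs) = g (zs!i)" and j: "j < length zs"
  shows "(g^^k) (zs!j) = zs!((j+k) mod length zs)"
proof (induction k)
  case 0 then show ?case using j by (cases zs) auto
next
  case (Suc k)
  have n: "length zs > 0" using j by linarith
  have "(g^^Suc k) (zs!j) = g (zs!((j+k) mod length zs))" using Suc by simp
  also have "\<dots> = zs!(((j+k) mod length zs + 1) mod length zs)"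
    using nx n by simp
  also have "\<dots> = zs!((j + Suc k) mod length zs)" by (simp add: mod_Suc_eq)
  finally show ?case .
qed

lemma cyc_set_orbit:
  assumes nx: "\<forall>i<length zs. zs!((i+1) mod length zs) = g (zs!i)" and j: "j < length zs"
  shows "set zs = range (\<lambda>k. (g^^k) (zs!j))"
proof
  show "set zs \<subseteq> range (\<lambda>k. (g^^k) (zs!j))"
  proof
    fix y assume "y \<in> set zs"
    then obtain i where i: "i < length zs" "y = zs!i" by (auto simp: in_set_conv_nth)
    have "(g^^(i + length zs - j)) (zs!j) = zs!((j + (i + length zs - j)) mod length zs)"
      using cyc_nth_funpow[OF nx j] .
    also have "j + (i + length zs - j) = i + length zs" using j by simp
    finally show "y \<in> range (\<lambda>k. (g^^k) (zs!j))" using i by (metis mod_add_self2 mod_less rangeI)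
  qed
next
  show "range (\<lambda>k. (g^^k) (zs!j)) \<subseteq> set zs"
  proof
    fix y assume "y \<in> range (\<lambda>k. (g^^k) (zs!j))"
    then obtain k where "y = (g^^k) (zs!j)" by auto
    then show "y \<in> set zs" using cyc_nth_funpow[OF nx j] j
      by (metis gr_implies_not0 mod_less_divisor nth_mem not_gr0)
  qed
qed

lemma cyc_edges_g:
  assumes nx: "\<forall>i<length zs. zs!((i+1) mod length zs) = g (zs!i)"
  shows "cycle_edges E zs = (\<lambda>y. edge_of E y (g y)) ` set zs"
proof
  show "cycle_edges E zs \<subseteq> (\<lambda>y. edge_of E y (g y)) ` set zs"
    unfolding cycle_edges_def using nx by auto
  show "(\<lambda>y. edge_of E y (g y)) ` set zs \<subseteq> cycle_edges E zs"
    unfolding cycle_edges_def using nx by (auto simp: in_set_conv_nth) metis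
qed

lemma periodic_list:
  assumes p: "(g^^p) x = x" "0 < p"
  shows "\<exists>zs. zs \<noteq> [] \<and> distinct zs \<and> zs!0 = x \<and>
    (\<forall>i<length zs. zs!((i+1) mod length zs) = g (zs!i)) \<and> (g x \<noteq> x \<longrightarrow> length zs \<ge> 2)"
proof -
  define q where "q = (LEAST q. 0 < q \<and> (g^^q) x = x)"
  have q: "0 < q \<and> (g^^q) x = x" unfolding q_def by (rule LeastI[of _ p]) (use p in auto)
  have qmin: "\<And>q'. 0 < q' \<Longrightarrow> (g^^q') x = x \<Longrightarrow> q \<le> q'" unfolding q_def by (auto intro: Least_le)
  define zs where "zs = map (\<lambda>i. (g^^i) x) [0..<q]"
  have len: "length zs = q" by (simp add: zs_def)
  have nth: "\<And>i. i < q \<Longrightarrow> zs!i = (g^^i) x" by (simp add: zs_def)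
  have dist: "distinct zs"
  proof -
    have "(g^^i) x \<noteq> (g^^j) x" if ij: "i < j" "j < q" for i j
    proof
      assume eq: "(g^^i) x = (g^^j) x"
      have "(g^^(q - j + i)) x = (g^^(q-j)) ((g^^i) x)" by (simp add: funpow_add)
      also have "\<dots> = (g^^(q-j)) ((g^^j) x)" using eq by simp
      also have "\<dots> = (g^^(q - j + j)) x" by (simp add: funpow_add)
      also have "\<dots> = x" using ij q by simp
      finally have "q \<le> q - j + i" using qmin ij by simp
      then show False using ij by simp
    qed
    then show ?thesis unfolding distinct_conv_nth len
      by (metis nth linorder_neqE_nat)
  qed
  have nx: "\<forall>i<length zs. zs!((i+1) mod length zs) = g (zs!i)"
  proof (intro allI impI)
    fix i assume i: "i < length zs"
    show "zs!((i+1) mod length zs) = g (zs!i)"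
    proof (cases "i + 1 < q")
      case True then show ?thesis using i len nth by simp
    next
      case False
      then have "i + 1 = q" using i len by simp
      then have "g (zs!i) = (g^^q) x" using nth i len by (metis funpow.simps(2) comp_apply Suc_eq_plus1)
      then show ?thesis using q len \<open>i+1 = q\<close> nth by simp
    qed
  qed
  have l2: "g x \<noteq> x \<longrightarrow> length zs \<ge> 2"
  proof
    assume gx: "g x \<noteq> x"
    have "q \<noteq> 1" using q gx by auto
    then show "length zs \<ge> 2" using q len by simp
  qed
  show ?thesis
    by (rule exI[of _ zs]) (use len q nth dist nx l2 in auto)
qed

lemma funpow_trans: "(g^^i) y = z \<Longrightarrow> (g^^j) z = w \<Longrightarrow> (g^^(j+i)) y = w"
  by (simp add: funpow_add)

lemma pigeon_nat:
  assumes "finite V" "\<And>k. h k \<in> V"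
  shows "\<exists>i j. i < j \<and> h i = h (j::nat)"
proof -
  have "\<not> inj_on h {0..card V}"
  proof
    assume "inj_on h {0..card V}"
    then have "card {0..card V} \<le> card V" using assms by (intro card_inj_on_le) auto
    then show False by simp
  qed
  then obtain i j where "i \<noteq> j" "h i = h j" unfolding inj_on_def by auto
  then show ?thesis by (metis linorder_neqE_nat)
qed

lemma rotate_props:
  assumes n: "0 < length xs"
  shows "length (rotate k xs) = length xs"
    and "\<And>j. j < length xs \<Longrightarrow> rotate k xs ! j = xs ! ((k + j) mod length xs)"
  using nth_rotate by auto

lemma rotate_cycle_edges:
  assumes n: "0 < length xs"
  shows "cycle_edges E (rotate k xs) = cycle_edges E xs"
proof -
  let ?n = "length xs"
  have r: "\<And>j. j < ?n \<Longrightarrow> rotate k xs ! j = xs ! ((k + j) mod ?n)" using nth_rotate by auto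
  have r2: "\<And>j. j < ?n \<Longrightarrow> rotate k xs ! ((j+1) mod ?n) = xs ! (((k + j) mod ?n + 1) mod ?n)"
    using r n by (simp add: mod_simps)
  show ?thesis
  proof
    show "cycle_edges E (rotate k xs) \<subseteq> cycle_edges E xs"
      unfolding cycle_edges_def using r r2 n by auto
  next
    show "cycle_edges E xs \<subseteq> cycle_edges E (rotate k xs)"
    proof
      fix y assume "y \<in> cycle_edges E xs"
      then obtain i where i: "i < ?n" "y = edge_of E (xs!i) (xs!((i+1) mod ?n))" unfolding cycle_edges_def by auto
      define j where "j = (i + ?n - k mod ?n) mod ?n"
      have j: "j < ?n" using n by (simp add: j_def)
      have kj: "(k + j) mod ?n = i"
      proof -
        have "(k + j) mod ?n = (k mod ?n + (i + ?n - k mod ?n)) mod ?n" unfolding j_def by (simp add: mod_simps)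
        also have "k mod ?n + (i + ?n - k mod ?n) = i + ?n"
          using mod_less_divisor[OF n, of k] by linarith
        finally show ?thesis using i by simp
      qed
      have "y = edge_of E (rotate k xs ! j) (rotate k xs ! ((j+1) mod length (rotate k xs)))"
        using r[OF j] r2[OF j] kj i by simp
      then show "y \<in> cycle_edges E (rotate k xs)" unfolding cycle_edges_def using j by auto
    qed
  qed
qed

lemma rotate_dcycle:
  assumes "dcycle E M xs"
  shows "dcycle E M (rotate k xs)"
proof -
  let ?n = "length xs"
  have n: "0 < ?n" using assms unfolding dcycle_def by linarith
  have r: "\<And>j. j < ?n \<Longrightarrow> rotate k xs ! j = xs ! ((k + j) mod ?n)" using nth_rotate by auto
  have r2: "\<And>j. j < ?n \<Longrightarrow> rotate k xs ! ((j+1) mod ?n) = xs ! (((k + j) mod ?n + 1) mod ?n)"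
    using r n by (simp add: mod_simps)
  show ?thesis using assms unfolding dcycle_def using r r2 n by auto
qed



lemma edge_of_verts: "edge_of E u w \<in> X \<Longrightarrow> u \<in> verts X \<and> w \<in> verts X"
proof -
  assume h: "edge_of E u w \<in> X"
  have "(u,w) \<in> X \<or> (w,u) \<in> X" using h unfolding edge_of_def by (cases "(u,w) \<in> E") simp_all
  then show ?thesis unfolding verts_def by (force intro: image_eqI)
qed

lemma edge_of_fst_snd: "fst (edge_of E u w) \<in> {u,w}" "snd (edge_of E u w) \<in> {u,w}"
  unfolding edge_of_def by simp_all

lemma wM_Un:
  assumes "finite H1" "finite H2" "H1 \<inter> H2 = {}"
  shows "wM R M (H1 \<union> H2) = wM R M H1 + wM R M H2"
proof -
  have p: "Eplus R M (H1 \<union> H2) = Eplus R M H1 \<union> Eplus R M H2" unfolding Eplus_def by auto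
  have m: "Eminus R M (H1 \<union> H2) = Eminus R M H1 \<union> Eminus R M H2" unfolding Eminus_def by auto
  have "card (Eplus R M (H1 \<union> H2)) = card (Eplus R M H1) + card (Eplus R M H2)"
    unfolding p by (rule card_Un_disjoint) (use assms in \<open>auto simp: Eplus_def\<close>)
  moreover have "card (Eminus R M (H1 \<union> H2)) = card (Eminus R M H1) + card (Eminus R M H2)"
    unfolding m by (rule card_Un_disjoint) (use assms in \<open>auto simp: Eminus_def\<close>)
  ultimately show ?thesis unfolding wM_def by simp
qed

lemma wM_empty: "wM R M {} = 0" unfolding wM_def Eplus_def Eminus_def by simp

locale bgm =
  fixes A B :: "'v set" and E R M :: "'v edge set"
  assumes bip: "bip_graph A B E R" and pmM: "perfect_matching A B E M"
begin

lemma finA: "finite A" and finB: "finite B" and disj: "A \<inter> B = {}" and EAB: "E \<subseteq> A \<times> B"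
  and RE: "R \<subseteq> E"
  using bip unfolding bip_graph_def by auto

lemma finE: "finite E" using EAB finA finB finite_subset by blast

lemma pm_sub: "perfect_matching A B E P \<Longrightarrow> P \<subseteq> E" unfolding perfect_matching_def by auto

lemma pm_uniq:
  assumes P: "perfect_matching A B E P" and x: "x \<in> P" "y \<in> P"
    and v: "v = fst x \<or> v = snd x" "v = fst y \<or> v = snd y"
  shows "x = y"
proof -
  have "x \<in> E" using pm_sub[OF P] x by auto
  then have "v \<in> A \<union> B" using EAB v by auto
  then have "\<exists>!z. z \<in> P \<and> (v = fst z \<or> v = snd z)" using P unfolding perfect_matching_def by auto
  then show ?thesis using x v by auto
qed

lemma pm_uniq_fst: "perfect_matching A B E P \<Longrightarrow> (a,b) \<in> P \<Longrightarrow> (a,b') \<in> P \<Longrightarrow> b = b'"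
  using pm_uniq[of P "(a,b)" "(a,b')" a] by auto

lemma pm_uniq_snd: "perfect_matching A B E P \<Longrightarrow> (a,b) \<in> P \<Longrightarrow> (a',b) \<in> P \<Longrightarrow> a = a'"
  using pm_uniq[of P "(a,b)" "(a',b)" b] by auto

lemma pm_ex_A:
  assumes P: "perfect_matching A B E P" and a: "a \<in> A"
  shows "\<exists>b. (a,b) \<in> P"
proof -
  obtain z where z: "z \<in> P" "a = fst z \<or> a = snd z" using P a unfolding perfect_matching_def by blast
  have "z \<in> A \<times> B" using z pm_sub[OF P] EAB by auto
  then have "a = fst z" using z a disj by auto
  then show ?thesis using z by (metis prod.collapse)
qed

lemma pm_ex_B:
  assumes P: "perfect_matching A B E P" and b: "b \<in> B"
  shows "\<exists>a. (a,b) \<in> P"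
proof -
  obtain z where z: "z \<in> P" "b = fst z \<or> b = snd z" using P b unfolding perfect_matching_def by blast
  have "z \<in> A \<times> B" using z pm_sub[OF P] EAB by auto
  then have "b = snd z" using z b disj by auto
  then show ?thesis using z by (metis prod.collapse)
qed

lemma ME: "M \<subseteq> E" using pm_sub[OF pmM] .

lemma arc_cases:
  assumes "(u,w) \<in> arcs E M"
  shows "((u,w) \<in> M \<and> (u,w) \<in> E \<and> u \<in> A \<and> w \<in> B \<and> edge_of E u w = (u,w)) \<or>
         ((w,u) \<in> E \<and> (w,u) \<notin> M \<and> u \<in> B \<and> w \<in> A \<and> (u,w) \<notin> M \<and> edge_of E u w = (w,u))"
proof -
  have "(u,w) \<in> M \<or> ((w,u) \<in> E \<and> (w,u) \<notin> M)" using assms unfolding arcs_def by auto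
  then show ?thesis
  proof
    assume "(u,w) \<in> M"
    then show ?thesis using ME EAB unfolding edge_of_def by auto
  next
    assume h: "(w,u) \<in> E \<and> (w,u) \<notin> M"
    then have "u \<in> B" "w \<in> A" using EAB by auto
    then have "(u,w) \<notin> E" using EAB disj by auto
    then show ?thesis using h ME \<open>u \<in> B\<close> \<open>w \<in> A\<close> unfolding edge_of_def by auto
  qed
qed

lemma arc_neq:
  assumes "(u,w) \<in> arcs E M" shows "u \<noteq> w"
proof
  assume "u = w"
  with arc_cases[OF assms] have "u \<in> A \<inter> B" by auto
  with disj show False by auto
qed

lemma arc_edge_E: assumes "(u,w) \<in> arcs E M" shows "edge_of E u w \<in> E"
  using arc_cases[OF assms] by auto

lemma arc_inj:
  assumes "(u,w) \<in> arcs E M" "(u',w') \<in> arcs E M" "edge_of E u w = edge_of E u' w'"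
  shows "u = u' \<and> w = w'"
proof -
  have d: "\<And>x. x \<in> A \<Longrightarrow> x \<in> B \<Longrightarrow> False" using disj by auto
  from arc_cases[OF assms(1)] show ?thesis
  proof (elim disjE conjE)
    assume h1: "(u,w) \<in> M" "edge_of E u w = (u,w)" "u \<in> A"
    from arc_cases[OF assms(2)] show ?thesis
    proof (elim disjE conjE)
      assume "edge_of E u' w' = (u',w')" then show ?thesis using h1 assms(3) by simp
    next
      assume "edge_of E u' w' = (w',u')" "(w',u') \<notin> M" then show ?thesis using h1 assms(3) by simp
    qed
  next
    assume h1: "(w,u) \<notin> M" "edge_of E u w = (w,u)"
    from arc_cases[OF assms(2)] show ?thesis
    proof (elim disjE conjE)
      assume "edge_of E u' w' = (u',w')" "(u',w') \<in> M" then show ?thesis using h1 assms(3) by simp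
    next
      assume "edge_of E u' w' = (w',u')" then show ?thesis using h1 assms(3) by simp
    qed
  qed
qed

lemma edge_arc:
  assumes "s \<in> E"
  shows "\<exists>u w. (u,w) \<in> arcs E M \<and> edge_of E u w = s"
proof -
  obtain a b where s: "s = (a,b)" by (cases s)
  show ?thesis
  proof (cases "s \<in> M")
    case True
    then have "(a,b) \<in> arcs E M" using s unfolding arcs_def by auto
    then show ?thesis using arc_cases s True by blast
  next
    case False
    then have ba: "(b,a) \<in> arcs E M" using s assms unfolding arcs_def by auto
    have aA: "a \<in> A" using s assms EAB by auto
    have "a \<notin> B" using aA disj by auto
    then have "edge_of E b a = (a,b)" using arc_cases[OF ba] s False by auto
    then show ?thesis using ba s by blast
  qed
qed

lemma dcycle_arc:
  "dcycle E M zs \<Longrightarrow> i < length zs \<Longrightarrow> (zs!i, zs!((i+1) mod length zs)) \<in> arcs E M"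
  unfolding dcycle_def by auto

lemma cycle_edge_arc:
  assumes "dcycle E M zs" "x \<in> cycle_edges E zs"
  shows "\<exists>i<length zs. x = edge_of E (zs!i) (zs!((i+1) mod length zs))"
  using assms unfolding cycle_edges_def by auto

lemma cycle_verts:
  assumes "dcycle E M zs"
  shows "verts (cycle_edges E zs) = set zs"
proof
  show "verts (cycle_edges E zs) \<subseteq> set zs"
  proof
    fix y assume "y \<in> verts (cycle_edges E zs)"
    then obtain s where s: "s \<in> cycle_edges E zs" "y = fst s \<or> y = snd s" unfolding verts_def by blast
    then obtain i where i: "i < length zs" "s = edge_of E (zs!i) (zs!((i+1) mod length zs))"
      unfolding cycle_edges_def by auto
    have n: "0 < length zs" using i(1) by linarith
    have "zs!((i+1) mod length zs) \<in> set zs" using mod_less_divisor[OF n] by (rule nth_mem)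
    moreover have "zs!i \<in> set zs" using i(1) by (rule nth_mem)
    moreover have "fst s \<in> {zs!i, zs!((i+1) mod length zs)}" "snd s \<in> {zs!i, zs!((i+1) mod length zs)}"
      unfolding i(2) by (rule edge_of_fst_snd)+
    moreover note s(2)
    ultimately show "y \<in> set zs" by auto
  qed
next
  show "set zs \<subseteq> verts (cycle_edges E zs)"
  proof
    fix y assume "y \<in> set zs"
    then obtain i where i: "i < length zs" "y = zs!i" by (auto simp: in_set_conv_nth)
    have "edge_of E (zs!i) (zs!((i+1) mod length zs)) \<in> cycle_edges E zs"
      unfolding cycle_edges_def using i by auto
    then show "y \<in> verts (cycle_edges E zs)" using edge_of_verts i(2) by metis
  qed
qed

lemma cycle_edges_E: assumes "dcycle E M zs" shows "cycle_edges E zs \<subseteq> E"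
proof
  fix x assume "x \<in> cycle_edges E zs"
  then obtain i where "i<length zs" "x = edge_of E (zs!i) (zs!((i+1) mod length zs))"
    using cycle_edge_arc[OF assms] by blast
  then show "x \<in> E" using dcycle_arc[OF assms] arc_edge_E by metis
qed

lemma finite_cycle_edges: "finite (cycle_edges E zs)"
  unfolding cycle_edges_def by simp

lemma dcycle_intro:
  assumes "distinct zs" "length zs \<ge> 2" "\<forall>i<length zs. zs!((i+1) mod length zs) = g (zs!i)"
    "\<forall>y\<in>set zs. (y, g y) \<in> arcs E M"
  shows "dcycle E M zs"
  unfolding dcycle_def using assms by auto

end



locale sdm = bgm +
  fixes N :: "'v edge set"
  assumes pmN: "perfect_matching A B E N"
begin

definition "Sd = symdiff M N"
definition "F y z \<longleftrightarrow> (y,z) \<in> arcs E M \<and> edge_of E y z \<in> Sd"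
definition "fn y = (THE z. F y z)"
definition "VS = verts Sd"
definition "edgesf W = (\<lambda>y. edge_of E y (fn y)) ` W"

lemma Sd_E: "Sd \<subseteq> E" unfolding Sd_def symdiff_def using ME pm_sub[OF pmN] by auto

lemma F_func:
  assumes "F y z" "F y z'" shows "z = z'"
proof -
  have a1: "(y,z) \<in> arcs E M" "edge_of E y z \<in> Sd" and a2: "(y,z') \<in> arcs E M" "edge_of E y z' \<in> Sd"
    using assms unfolding F_def by auto
  have d: "y \<in> A \<Longrightarrow> y \<in> B \<Longrightarrow> False" using disj by auto
  from arc_cases[OF a1(1)] show ?thesis
  proof (elim disjE conjE)
    assume h: "(y,z) \<in> M" "y \<in> A"
    from arc_cases[OF a2(1)] show ?thesis
    proof (elim disjE conjE)
      assume "(y,z') \<in> M" then show ?thesis using h pm_uniq_fst[OF pmM] by blast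
    next
      assume "y \<in> B" then show ?thesis using h d by blast
    qed
  next
    assume h: "y \<in> B" "(z,y) \<notin> M" "edge_of E y z = (z,y)"
    from arc_cases[OF a2(1)] show ?thesis
    proof (elim disjE conjE)
      assume "y \<in> A" then show ?thesis using h d by blast
    next
      assume h2: "(z',y) \<notin> M" "edge_of E y z' = (z',y)"
      have "(z,y) \<in> N" using h a1(2) unfolding Sd_def symdiff_def by auto
      moreover have "(z',y) \<in> N" using h2 a2(2) unfolding Sd_def symdiff_def by auto
      ultimately show ?thesis using pm_uniq_snd[OF pmN] by blast
    qed
  qed
qed

lemma F_inj:
  assumes "F y z" "F y' z" shows "y = y'"
proof -
  have a1: "(y,z) \<in> arcs E M" "edge_of E y z \<in> Sd" and a2: "(y',z) \<in> arcs E M" "edge_of E y' z \<in> Sd"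
    using assms unfolding F_def by auto
  have d: "z \<in> A \<Longrightarrow> z \<in> B \<Longrightarrow> False" using disj by auto
  from arc_cases[OF a1(1)] show ?thesis
  proof (elim disjE conjE)
    assume h: "(y,z) \<in> M" "z \<in> B"
    from arc_cases[OF a2(1)] show ?thesis
    proof (elim disjE conjE)
      assume "(y',z) \<in> M" then show ?thesis using h pm_uniq_snd[OF pmM] by blast
    next
      assume "z \<in> A" then show ?thesis using h d by blast
    qed
  next
    assume h: "z \<in> A" "(z,y) \<notin> M" "edge_of E y z = (z,y)"
    from arc_cases[OF a2(1)] show ?thesis
    proof (elim disjE conjE)
      assume "z \<in> B" then show ?thesis using h d by blast
    next
      assume h2: "(z,y') \<notin> M" "edge_of E y' z = (z,y')"
      have "(z,y) \<in> N" using h a1(2) unfolding Sd_def symdiff_def by auto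
      moreover have "(z,y') \<in> N" using h2 a2(2) unfolding Sd_def symdiff_def by auto
      ultimately show ?thesis using pm_uniq_fst[OF pmN] by blast
    qed
  qed
qed

lemma F_total:
  assumes y: "y \<in> VS" shows "\<exists>z. F y z"
proof -
  obtain s where s: "s \<in> Sd" "y = fst s \<or> y = snd s" using y unfolding VS_def verts_def by blast
  obtain a b where ab: "s = (a,b)" by (cases s)
  have sE: "(a,b) \<in> E" using s ab Sd_E by auto
  then have aA: "a \<in> A" and bB: "b \<in> B" using EAB by auto
  have sMN: "((a,b) \<in> M \<and> (a,b) \<notin> N) \<or> ((a,b) \<in> N \<and> (a,b) \<notin> M)"
    using s ab unfolding Sd_def symdiff_def by auto
  from s(2) ab have "y = a \<or> y = b" by simp
  then show ?thesis
  proof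
    assume ya: "y = a"
    obtain b0 where b0: "(a,b0) \<in> M" using pm_ex_A[OF pmM aA] by blast
    have b0N: "(a,b0) \<notin> N"
    proof
      assume b0N: "(a,b0) \<in> N"
      from sMN show False
      proof
        assume "(a,b) \<in> M \<and> (a,b) \<notin> N"
        then show False using b0 b0N pm_uniq_fst[OF pmM, of a b b0] by auto
      next
        assume "(a,b) \<in> N \<and> (a,b) \<notin> M"
        then show False using b0 b0N pm_uniq_fst[OF pmN, of a b b0] by auto
      qed
    qed
    have arc: "(a,b0) \<in> arcs E M" using b0 unfolding arcs_def by auto
    have "edge_of E a b0 = (a,b0)" using b0 ME unfolding edge_of_def by auto
    then have "edge_of E a b0 \<in> Sd" using b0 b0N unfolding Sd_def symdiff_def by auto
    then show ?thesis using arc ya unfolding F_def by blast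
  next
    assume yb: "y = b"
    obtain a0 where a0: "(a0,b) \<in> N" using pm_ex_B[OF pmN bB] by blast
    have a0M: "(a0,b) \<notin> M"
    proof
      assume a0M: "(a0,b) \<in> M"
      from sMN show False
      proof
        assume "(a,b) \<in> M \<and> (a,b) \<notin> N"
        then show False using a0 a0M pm_uniq_snd[OF pmM, of a b a0] by auto
      next
        assume "(a,b) \<in> N \<and> (a,b) \<notin> M"
        then show False using a0 a0M pm_uniq_snd[OF pmN, of a b a0] by auto
      qed
    qed
    have a0E: "(a0,b) \<in> E" using a0 pm_sub[OF pmN] by auto
    have arc: "(b,a0) \<in> arcs E M" using a0E a0M unfolding arcs_def by auto
    have "b \<notin> A" using bB disj by auto
    then have "(b,a0) \<notin> E" using EAB by auto
    then have "edge_of E b a0 = (a0,b)" unfolding edge_of_def by auto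
    then have "edge_of E b a0 \<in> Sd" using a0 a0M unfolding Sd_def symdiff_def by auto
    then show ?thesis using arc yb unfolding F_def by blast
  qed
qed

lemma F_V: "F y z \<Longrightarrow> y \<in> VS \<and> z \<in> VS"
  unfolding F_def VS_def using edge_of_verts by metis

lemma F_neq: "F y z \<Longrightarrow> y \<noteq> z"
  unfolding F_def using arc_neq by blast

lemma f_eq: "F y z \<Longrightarrow> fn y = z"
  unfolding fn_def using F_func by blast

lemma f_F: "y \<in> VS \<Longrightarrow> F y (fn y)"
  using F_total f_eq by metis

lemma VS_fin: "finite VS"
proof -
  have "finite Sd" using Sd_E finE finite_subset by blast
  then show ?thesis unfolding VS_def verts_def by simp
qed

lemma f_V: "fn ` VS \<subseteq> VS" using f_F F_V by blast

lemma f_inj: "inj_on fn VS"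
  unfolding inj_on_def using f_F F_inj by metis

lemma f_surj: "fn ` VS = VS" using endo_inj_surj[OF VS_fin f_V f_inj] .

lemma edgesf_V: "edgesf VS = Sd"
proof
  show "edgesf VS \<subseteq> Sd" unfolding edgesf_def using f_F unfolding F_def by blast
next
  show "Sd \<subseteq> edgesf VS"
  proof
    fix s assume s: "s \<in> Sd"
    then obtain u w where uw: "(u,w) \<in> arcs E M" "edge_of E u w = s" using edge_arc Sd_E by blast
    then have "F u w" using s unfolding F_def by simp
    then have "u \<in> VS" "fn u = w" using F_V f_eq by auto
    then show "s \<in> edgesf VS" unfolding edgesf_def using uw by blast
  qed
qed

lemma cycle_in_Sd:
  assumes "dcycle E M zs" "cycle_edges E zs \<subseteq> Sd"
  shows "\<forall>i<length zs. zs!((i+1) mod length zs) = fn (zs!i)"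
proof (intro allI impI)
  fix i assume i: "i < length zs"
  have "edge_of E (zs!i) (zs!((i+1) mod length zs)) \<in> cycle_edges E zs"
    unfolding cycle_edges_def using i by blast
  then have "F (zs!i) (zs!((i+1) mod length zs))"
    using assms dcycle_arc[OF assms(1) i] unfolding F_def by blast
  then show "zs!((i+1) mod length zs) = fn (zs!i)" using f_eq by metis
qed

lemma cycle_in_Sd_edges:
  assumes "dcycle E M zs" "cycle_edges E zs \<subseteq> Sd" "y \<in> set zs"
  shows "cycle_edges E zs = edgesf (range (\<lambda>k. (fn^^k) y))"
proof -
  have nx: "\<forall>i<length zs. zs!((i+1) mod length zs) = fn (zs!i)" using cycle_in_Sd assms by blast
  obtain j where j: "j < length zs" "y = zs!j" using assms(3) by (auto simp: in_set_conv_nth)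
  show ?thesis using cyc_edges_g[OF nx] cyc_set_orbit[OF nx j(1)] j unfolding edgesf_def by simp
qed

lemma orbit_V: "y \<in> VS \<Longrightarrow> (fn^^k) y \<in> VS"
  by (induction k) (use f_V in auto)

lemma orbit_cycle:
  assumes y: "y \<in> VS"
  shows "\<exists>zs. dcycle E M zs \<and> y \<in> set zs \<and> cycle_edges E zs = edgesf (set zs)
     \<and> set zs = range (\<lambda>k. (fn^^k) y) \<and> set zs \<subseteq> VS"
proof -
  obtain i j where ij: "i < j" "(fn^^i) y = (fn^^j) y"
    using pigeon_nat[OF VS_fin, of "\<lambda>k. (fn^^k) y"] orbit_V[OF y] by blast
  have cancel: "(fn^^(i'+d)) y = (fn^^i') y \<Longrightarrow> (fn^^d) y = y" for i' d
  proof (induction i')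
    case 0 then show ?case by simp
  next
    case (Suc i')
    have "fn ((fn^^(i'+d)) y) = fn ((fn^^i') y)" using Suc.prems by simp
    then have "(fn^^(i'+d)) y = (fn^^i') y" using f_inj orbit_V[OF y] unfolding inj_on_def by blast
    then show ?case using Suc.IH by simp
  qed
  have per: "(fn^^(j-i)) y = y" using cancel[of i "j-i"] ij by simp
  have gy: "fn y \<noteq> y" using f_F[OF y] F_neq by metis
  obtain zs where zs: "zs \<noteq> []" "distinct zs" "zs!0 = y"
    "\<forall>i<length zs. zs!((i+1) mod length zs) = fn (zs!i)" "length zs \<ge> 2"
    using periodic_list[OF per] ij gy by auto
  have so: "set zs = range (\<lambda>k. (fn^^k) y)" using cyc_set_orbit[OF zs(4), of 0] zs by simp
  have sV: "set zs \<subseteq> VS" using so orbit_V[OF y] by auto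
  have dc: "dcycle E M zs"
    by (rule dcycle_intro[OF zs(2) zs(5) zs(4)]) (use sV f_F in \<open>auto simp: F_def\<close>)
  have "y \<in> set zs" using zs by (metis nth_mem length_greater_0_conv)
  then show ?thesis using dc so sV cyc_edges_g[OF zs(4)] unfolding edgesf_def by blast
qed

lemma wM_Sd:
  "wM R M Sd = int (card (red R N)) - int (card (red R M))"
proof -
  have fN: "finite N" using pm_sub[OF pmN] finE finite_subset by blast
  have fM: "finite M" using ME finE finite_subset by blast
  have p: "Eplus R M Sd = (N \<inter> R) - M" unfolding Eplus_def Sd_def symdiff_def by auto
  have m: "Eminus R M Sd = (M \<inter> R) - N" unfolding Eminus_def Sd_def symdiff_def by auto
  have c1: "card (N \<inter> R) = card ((N \<inter> R) \<inter> M) + card ((N \<inter> R) - M)"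
    using card_Int_Diff fN by blast
  have c2: "card (M \<inter> R) = card ((M \<inter> R) \<inter> N) + card ((M \<inter> R) - N)"
    using card_Int_Diff fM by blast
  have "(N \<inter> R) \<inter> M = (M \<inter> R) \<inter> N" by auto
  then show ?thesis unfolding wM_def p m red_def using c1 c2 by simp
qed

lemma decomp:
  "finite W \<Longrightarrow> W \<subseteq> VS \<Longrightarrow> fn ` W = W \<Longrightarrow> 0 < wM R M (edgesf W) \<Longrightarrow>
   \<exists>C. is_dcycle E M C \<and> C \<subseteq> Sd \<and> 0 < wM R M C"
proof (induction "card W" arbitrary: W rule: less_induct)
  case less
  have "W \<noteq> {}"
  proof
    assume "W = {}"
    then have "edgesf W = {}" unfolding edgesf_def by simp
    then have "wM R M (edgesf W) = 0" using wM_empty by simp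
    then show False using less.prems(4) by simp
  qed
  then obtain y where yW: "y \<in> W" by blast
  then have yV: "y \<in> VS" using less.prems by blast
  obtain zs where zs: "dcycle E M zs" "y \<in> set zs" "cycle_edges E zs = edgesf (set zs)"
    "set zs = range (\<lambda>k. (fn^^k) y)" "set zs \<subseteq> VS"
    using orbit_cycle[OF yV] by blast
  define Ob where "Ob = set zs"
  have orbW: "(fn^^k) y \<in> W" for k
    by (induction k) (use yW less.prems(3) in auto)
  have OW: "Ob \<subseteq> W" unfolding Ob_def using zs(4) orbW by auto
  have CS: "cycle_edges E zs \<subseteq> Sd" unfolding zs(3) edgesf_def using zs(5) f_F unfolding F_def by blast
  show ?case
  proof (cases "0 < wM R M (cycle_edges E zs)")
    case True
    then show ?thesis using zs(1) CS unfolding is_dcycle_def by blast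
  next
    case False
    define W' where "W' = W - Ob"
    have fO: "fn ` Ob \<subseteq> Ob" unfolding Ob_def zs(4)
    proof
      fix z assume "z \<in> fn ` range (\<lambda>k. (fn^^k) y)"
      then obtain k where "z = fn ((fn^^k) y)" by auto
      then have "z = (fn^^(Suc k)) y" by simp
      then show "z \<in> range (\<lambda>k. (fn^^k) y)" by blast
    qed
    have injW: "inj_on fn W" using f_inj less.prems(2) inj_on_subset by blast
    have fOO: "fn ` Ob = Ob"
      using endo_inj_surj[OF _ fO] inj_on_subset[OF injW OW] unfolding Ob_def by simp
    have fW': "fn ` W' = W'" unfolding W'_def
      using inj_on_image_set_diff[OF injW Diff_subset OW] less.prems(3) fOO by simp
    have WU: "W = Ob \<union> W'" using OW unfolding W'_def by auto
    have un: "edgesf W = edgesf Ob \<union> edgesf W'" unfolding edgesf_def by (subst WU) (rule image_Un)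
    have dj: "edgesf Ob \<inter> edgesf W' = {}"
    proof (rule ccontr)
      assume "edgesf Ob \<inter> edgesf W' \<noteq> {}"
      then obtain a b where ab: "a \<in> Ob" "b \<in> W'" "edge_of E a (fn a) = edge_of E b (fn b)"
        unfolding edgesf_def by blast
      have "(a, fn a) \<in> arcs E M" "(b, fn b) \<in> arcs E M"
        using ab f_F less.prems(2) OW unfolding W'_def F_def by blast+
      then have "a = b" using arc_inj ab(3) by blast
      then show False using ab unfolding W'_def by blast
    qed
    have finW: "finite W'" "finite Ob" using less.prems(1) OW unfolding W'_def by (auto intro: finite_subset)
    have "wM R M (edgesf W) = wM R M (edgesf Ob) + wM R M (edgesf W')"
      unfolding un by (rule wM_Un) (use dj finW in \<open>auto simp: edgesf_def\<close>)
    moreover have "wM R M (edgesf Ob) \<le> 0" using False zs(3) unfolding Ob_def by simp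
    ultimately have pos: "0 < wM R M (edgesf W')" using less.prems(4) by simp
    have "y \<in> Ob" using zs(2) unfolding Ob_def .
    then have "W' \<subset> W" using yW unfolding W'_def by blast
    then have "card W' < card W" using psubset_card_mono[OF less.prems(1)] by blast
    then show ?thesis using less.hyps[OF _ finW(1) _ fW' pos] less.prems(2) unfolding W'_def by blast
  qed
qed

lemma exists_pos_cycle:
  assumes "card (red R M) < card (red R N)"
  shows "\<exists>C. is_dcycle E M C \<and> C \<subseteq> Sd \<and> 0 < wM R M C"
  using decomp[OF VS_fin _ f_surj] edgesf_V wM_Sd assms by simp

end



definition idx :: "'a list \<Rightarrow> 'a \<Rightarrow> nat" where
  "idx xs y = (LEAST i. i < length xs \<and> xs!i = y)"

lemma idx_nth:
  assumes d: "distinct xs" and i: "i < length xs" shows "idx xs (xs!i) = i"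
  unfolding idx_def
proof (rule Least_equality)
  show "i < length xs \<and> xs ! i = xs ! i" using i by simp
next
  fix y assume "y < length xs \<and> xs ! y = xs ! i"
  then have "y = i" using nth_eq_iff_index_eq[OF d] i by blast
  then show "i \<le> y" by simp
qed

lemma set_butlast_nth: "y \<in> set (butlast xs) \<Longrightarrow> \<exists>i. i + 1 < length xs \<and> y = xs!i"
proof -
  assume "y \<in> set (butlast xs)"
  then obtain i where i: "i < length (butlast xs)" "y = butlast xs ! i" by (auto simp: in_set_conv_nth)
  then have "i < length xs - 1" by simp
  then show ?thesis using i nth_butlast by (intro exI[of _ i]) auto
qed

lemma nth_in_butlast: "i + 1 < length xs \<Longrightarrow> xs!i \<in> set (butlast xs)"
proof -
  assume i: "i + 1 < length xs"
  then have "i < length (butlast xs)" by simp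
  then have "butlast xs ! i \<in> set (butlast xs)" by (rule nth_mem)
  then show ?thesis using i nth_butlast[of i xs] by simp
qed

lemma set_butlast_tl_nth: "y \<in> set (butlast (tl xs)) \<Longrightarrow> \<exists>i. 0 < i \<and> i + 1 < length xs \<and> y = xs!i"
proof -
  assume h: "y \<in> set (butlast (tl xs))"
  obtain i where i: "i + 1 < length (tl xs)" "y = tl xs ! i" using set_butlast_nth[OF h] by blast
  have "Suc i + 1 < length xs" using i(1) by simp
  moreover have "y = xs ! Suc i"
  proof -
    have "i < length (tl xs)" using i(1) by simp
    then have "tl xs ! i = xs ! Suc i" by (rule nth_tl)
    then show ?thesis using i(2) by simp
  qed
  moreover have "0 < Suc i" by simp
  ultimately show ?thesis by (rule_tac x="Suc i" in exI) simp
qed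

context bgm
begin

lemma core:
  assumes cs: "dcycle E M cs" and ds: "dcycle E M ds"
  and cs0: "cs!0 = h" and csn: "cs!(length cs - 1) = t"
  and ds0: "ds!0 = h" and dsn: "ds!(length ds - 1) = t"
  and x: "x \<in> cycle_edges E cs" and xC: "x \<notin> cycle_edges E ds"
  shows "\<exists>Q. is_jump E M (cycle_edges E cs) (cycle_edges E ds) Q \<and> x \<notin> CQ E M (cycle_edges E cs) Q
           \<and> edge_of E t h \<in> CQ E M (cycle_edges E cs) Q"
proof -
  define n where "n = length cs"
  define m where "m = length ds"
  define Cp where "Cp = cycle_edges E cs"
  define C where "C = cycle_edges E ds"
  have n2: "n \<ge> 2" and m2: "m \<ge> 2" and dcs: "distinct cs" and dds: "distinct ds"
    using cs ds unfolding dcycle_def n_def m_def by auto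
  have csarc: "\<And>r. r < n \<Longrightarrow> (cs!r, cs!((r+1) mod n)) \<in> arcs E M" using dcycle_arc[OF cs] n_def by simp
  have dsarc: "\<And>r. r < m \<Longrightarrow> (ds!r, ds!((r+1) mod m)) \<in> arcs E M" using dcycle_arc[OF ds] m_def by simp
  have csE: "\<And>r. r < n \<Longrightarrow> edge_of E (cs!r) (cs!((r+1) mod n)) \<in> Cp"
    unfolding Cp_def cycle_edges_def n_def by blast
  have dsE: "\<And>r. r < m \<Longrightarrow> edge_of E (ds!r) (ds!((r+1) mod m)) \<in> C"
    unfolding C_def cycle_edges_def m_def by blast
  have csinj: "\<And>r r'. r < n \<Longrightarrow> r' < n \<Longrightarrow> cs!r = cs!r' \<Longrightarrow> r = r'"
    using dcs nth_eq_iff_index_eq n_def by metis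
  have dsinj: "\<And>r r'. r < m \<Longrightarrow> r' < m \<Longrightarrow> ds!r = ds!r' \<Longrightarrow> r = r'"
    using dds nth_eq_iff_index_eq m_def by metis
  have csn': "cs!(n-1) = t" using csn n_def by simp
  have dsn': "ds!(m-1) = t" using dsn m_def by simp
  have e1: "n - 1 + 1 = n" using n2 by simp
  have e2: "m - 1 + 1 = m" using m2 by simp
  have "(cs!(n-1), cs!((n-1+1) mod n)) \<in> arcs E M" by (rule csarc) (use n2 in simp)
  then have "(cs!(n-1), cs!(n mod n)) \<in> arcs E M" by (simp only: e1)
  then have th_arc: "(t,h) \<in> arcs E M" using csn' cs0 by simp
  have "edge_of E (ds!(m-1)) (ds!((m-1+1) mod m)) \<in> C" by (rule dsE) (use m2 in simp)
  then have "edge_of E (ds!(m-1)) (ds!(m mod m)) \<in> C" by (simp only: e2)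
  then have eC: "edge_of E t h \<in> C" using dsn' ds0 by simp
  obtain p where p: "p < n" "x = edge_of E (cs!p) (cs!((p+1) mod n))"
    using cycle_edge_arc[OF cs x] n_def by blast
  have pn: "p + 1 < n"
  proof (rule ccontr)
    assume "\<not> p + 1 < n"
    then have "p = n - 1" using p by simp
    have hn: "cs!((n-1+1) mod n) = h" by (simp only: e1) (simp add: cs0)
    have "x = edge_of E (cs!(n-1)) (cs!((n-1+1) mod n))" using p \<open>p = n - 1\<close> by simp
    then have "x = edge_of E t h" using hn csn' by simp
    then show False using eC xC C_def by simp
  qed
  have xp: "x = edge_of E (cs!p) (cs!(p+1))" using p pn by simp
  define L where "L = {j. j < m \<and> (\<exists>r \<le> p. ds!j = cs!r)}"
  have L0: "0 \<in> L" unfolding L_def using m2 cs0 ds0 by auto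
  have Lfin: "finite L" unfolding L_def by simp
  define j0 where "j0 = Max L"
  have j0L: "j0 \<in> L" unfolding j0_def using Lfin L0 Max_in by blast
  have j0max: "\<And>j. j \<in> L \<Longrightarrow> j \<le> j0" unfolding j0_def using Lfin by simp
  obtain a where a: "a \<le> p" "ds!j0 = cs!a" using j0L unfolding L_def by blast
  have j0m: "j0 < m" using j0L unfolding L_def by simp
  have mL: "m - 1 \<notin> L"
  proof
    assume "m - 1 \<in> L"
    then obtain r where r: "r \<le> p" "ds!(m-1) = cs!r" unfolding L_def by blast
    then have "cs!r = cs!(n-1)" using dsn csn m_def n_def by simp
    then have "r = n - 1" using csinj[of r "n-1"] r pn n2 by simp
    then show False using r pn by simp
  qed
  have "j0 \<noteq> m - 1" using j0L mL by auto
  then have j0m1: "j0 < m - 1" using j0m by simp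
  define H where "H = {j. j0 < j \<and> j < m \<and> ds!j \<in> set cs}"
  have "cs!(n-1) \<in> set cs" using n2 n_def by (intro nth_mem) simp
  then have mH: "m - 1 \<in> H" unfolding H_def using j0m1 dsn csn m_def n_def m2 by simp
  have Hfin: "finite H" unfolding H_def by simp
  define j1 where "j1 = Min H"
  have j1H: "j1 \<in> H" unfolding j1_def using Hfin mH Min_in by blast
  have j1min: "\<And>j. j \<in> H \<Longrightarrow> j1 \<le> j" unfolding j1_def using Hfin by simp
  have j01: "j0 < j1" "j1 < m" using j1H unfolding H_def by auto
  obtain b where b: "b < n" "ds!j1 = cs!b" using j1H unfolding H_def n_def by (auto simp: in_set_conv_nth)
  have pb: "p < b"
  proof (rule ccontr)
    assume "\<not> p < b"
    then have "b \<le> p" by simp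
    then have "j1 \<in> L" unfolding L_def using b j01 by blast
    then show False using j0max j01 by fastforce
  qed
  have inner: "\<And>j. j0 < j \<Longrightarrow> j < j1 \<Longrightarrow> ds!j \<notin> set cs"
  proof
    fix j assume "j0 < j" "j < j1" "ds!j \<in> set cs"
    then have "j \<in> H" unfolding H_def using j01 by auto
    then show False using j1min \<open>j < j1\<close> by fastforce
  qed
  have ab: "a < b" using a pb by simp
  have an: "a + 1 < n" using a pn by simp
  define u where "u = cs!a"
  define v where "v = cs!b"
  have uds: "ds!j0 = u" and vds: "ds!j1 = v" using a b unfolding u_def v_def by auto
  define l where "l = Suc (j1 - j0)"
  define qs where "qs = map (\<lambda>i. ds!(j0+i)) [0..<l]"
  have lq: "length qs = l" unfolding qs_def by simp
  have qnth: "\<And>i. i < l \<Longrightarrow> qs!i = ds!(j0+i)" unfolding qs_def by simp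
  have l2: "l \<ge> 2" unfolding l_def using j01 by simp
  have jl: "j0 + (l - 1) = j1" unfolding l_def using j01 by simp
  have jlm: "\<And>i. i < l \<Longrightarrow> j0 + i < m" unfolding l_def using j01 by linarith
  have q0: "qs!0 = u" using qnth[of 0] l2 uds by simp
  have ql: "qs!(l-1) = v" using qnth[of "l-1"] l2 vds jl by simp
  have qdist: "distinct qs"
    unfolding distinct_conv_nth lq
  proof (intro allI impI)
    fix i j assume ij: "i < l" "j < l" "i \<noteq> j"
    show "qs!i \<noteq> qs!j"
    proof
      assume "qs!i = qs!j"
      then have "ds!(j0+i) = ds!(j0+j)" using qnth ij by simp
      then have "j0 + i = j0 + j" using dsinj jlm ij by blast
      then show False using ij by simp
    qed
  qed
  have qarc: "\<And>i. i + 1 < l \<Longrightarrow> (qs!i, qs!(i+1)) \<in> arcs E M"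
  proof -
    fix i assume i: "i + 1 < l"
    have "(ds!(j0+i), ds!((j0+i+1) mod m)) \<in> arcs E M" using dsarc jlm i by simp
    moreover have "(j0+i+1) mod m = j0 + (i+1)" using jlm[of "i+1"] i by simp
    ultimately show "(qs!i, qs!(i+1)) \<in> arcs E M" using qnth i by simp
  qed
  have qC: "\<And>i. i + 1 < l \<Longrightarrow> edge_of E (qs!i) (qs!(i+1)) \<in> C"
  proof -
    fix i assume i: "i + 1 < l"
    have "edge_of E (ds!(j0+i)) (ds!((j0+i+1) mod m)) \<in> C" using dsE jlm i by simp
    moreover have "(j0+i+1) mod m = j0 + (i+1)" using jlm[of "i+1"] i by simp
    ultimately show "edge_of E (qs!i) (qs!(i+1)) \<in> C" using qnth i by simp
  qed
  have qinner: "\<And>i. 0 < i \<Longrightarrow> i + 1 < l \<Longrightarrow> qs!i \<notin> set cs"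
  proof -
    fix i assume i: "0 < i" "i + 1 < l"
    have "j0 + i < j1" using i jl by linarith
    then have "ds!(j0+i) \<notin> set cs" using inner i by simp
    then show "qs!i \<notin> set cs" using qnth i by simp
  qed
  have qcs: "i = 0 \<or> i = l - 1" if i: "i < l" "qs!i \<in> set cs" for i
  proof (rule ccontr)
    assume h: "\<not> (i = 0 \<or> i = l - 1)"
    then have "0 < i" "i + 1 < l" using i by auto
    then show False using qinner i by blast
  qed
  define Q where "Q = path_edges E qs"
  have Qmem: "\<And>y. y \<in> Q \<longleftrightarrow> (\<exists>i. i + 1 < l \<and> y = edge_of E (qs!i) (qs!(i+1)))"
    unfolding Q_def path_edges_def lq by auto
  have QC: "Q \<subseteq> C"
  proof
    fix y assume "y \<in> Q"
    then obtain i where "i + 1 < l" "y = edge_of E (qs!i) (qs!(i+1))" using Qmem by blast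
    then show "y \<in> C" using qC by simp
  qed
  have csmem: "\<And>r. r < n \<Longrightarrow> cs!r \<in> set cs" unfolding n_def by (rule nth_mem)
  have ucs: "u \<in> set cs" unfolding u_def using a pn csmem by simp
  have vcs: "v \<in> set cs" unfolding v_def using b csmem by simp
  have QCp: "Q \<inter> Cp = {}"
  proof (rule ccontr)
    assume "Q \<inter> Cp \<noteq> {}"
    then obtain y where y: "y \<in> Q" "y \<in> Cp" by blast
    obtain i where i: "i + 1 < l" "y = edge_of E (qs!i) (qs!(i+1))" using y Qmem by blast
    obtain r where r: "r < n" "y = edge_of E (cs!r) (cs!((r+1) mod n))"
      using cycle_edge_arc[OF cs] y Cp_def n_def by blast
    have eq: "qs!i = cs!r" "qs!(i+1) = cs!((r+1) mod n)"
      using arc_inj[OF qarc[OF i(1)] csarc[OF r(1)]] i r by auto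
    have "(r+1) mod n < n" using n2 by simp
    then have "qs!(i+1) \<in> set cs" using eq csmem by simp
    then have i1: "i + 1 = l - 1" using qcs[of "i+1"] i by simp
    have "qs!i \<in> set cs" using eq csmem r by simp
    then have "i = 0 \<or> i = l - 1" using qcs[of i] i by simp
    then have i0: "i = 0" using i by linarith
    have "cs!a = cs!r" using eq(1) i0 q0 u_def by simp
    then have ra: "r = a" using csinj r an by simp
    have "cs!b = cs!(a+1)" using eq(2) i0 i1 ql v_def ra an by simp
    then have "b = a + 1" using csinj b an by simp
    then have "p = a" using a pb by simp
    then have "y = x" using xp r ra an by simp
    then show False using y QC xC C_def by blast
  qed
  have qne: "qs \<noteq> []" using lq l2 by (cases qs) auto
  have vCp: "verts Cp = set cs" unfolding Cp_def using cycle_verts[OF cs] .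
  have jump: "is_jump E M Cp C Q"
    unfolding is_jump_def
  proof (intro exI conjI)
    show "dpath E M qs" unfolding dpath_def using qne qdist qarc lq by simp
    show "2 \<le> length qs" using lq l2 by simp
    show "Q = path_edges E qs" unfolding Q_def ..
    show "Q \<subseteq> C" using QC .
    show "hd qs \<in> verts Cp" using q0 ucs vCp hd_conv_nth[OF qne] by simp
    show "last qs \<in> verts Cp" using ql vcs vCp last_conv_nth[OF qne] lq by simp
    show "set (butlast (tl qs)) \<inter> verts Cp = {}"
    proof (rule ccontr)
      assume "set (butlast (tl qs)) \<inter> verts Cp \<noteq> {}"
      then obtain y where y: "y \<in> set (butlast (tl qs))" "y \<in> set cs" using vCp by blast
      obtain i where "0 < i" "i + 1 < length qs" "y = qs!i" using set_butlast_tl_nth[OF y(1)] by blast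
      then show False using qinner y lq by blast
    qed
    show "Q \<inter> Cp = {}" using QCp .
  qed
  define g where "g y = (if y \<in> set (butlast qs) then qs!(Suc (idx qs y)) else cs!(Suc (idx cs y) mod n))" for y
  have g1: "g (qs!i) = qs!(i+1)" if i: "i + 1 < l" for i
  proof -
    have "qs!i \<in> set (butlast qs)" using nth_in_butlast[of i qs] i lq by simp
    moreover have "idx qs (qs!i) = i" using idx_nth[OF qdist] i lq by simp
    ultimately show ?thesis unfolding g_def by simp
  qed
  have cs_bl: "cs!r \<notin> set (butlast qs)" if r: "r < n" "r \<noteq> a" for r
  proof
    assume h: "cs!r \<in> set (butlast qs)"
    obtain i where i: "i + 1 < length qs" "cs!r = qs!i" using set_butlast_nth[OF h] by blast
    then have "i = 0 \<or> i = l - 1" using qcs[of i] csmem[OF r(1)] lq by simp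
    then have "i = 0" using i lq by linarith
    then have "cs!r = cs!a" using i q0 u_def by simp
    moreover have "a < n" using an by simp
    ultimately have "r = a" using csinj[of r a] r(1) by blast
    then show False using r(2) by blast
  qed
  have g2: "g (cs!r) = cs!((r+1) mod n)" if r: "r < n" "r \<noteq> a" for r
  proof -
    have "idx cs (cs!r) = r" using idx_nth[OF dcs] r n_def by simp
    then show ?thesis unfolding g_def using cs_bl[OF r] by simp
  qed
  have it1: "i < l \<Longrightarrow> (g^^i) u = qs!i" for i
  proof (induction i)
    case 0 then show ?case using q0 by simp
  next
    case (Suc i)
    then have "(g^^i) u = qs!i" by simp
    then show ?case using g1[of i] Suc.prems by simp
  qed
  have it2: "b + s < n \<Longrightarrow> (g^^s) v = cs!(b+s)" for s
  proof (induction s)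
    case 0 then show ?case using v_def by simp
  next
    case (Suc s)
    then have "(g^^s) v = cs!(b+s)" by simp
    moreover have "g (cs!(b+s)) = cs!((b+s+1) mod n)" using g2[of "b+s"] Suc.prems ab by simp
    moreover have "(b+s+1) mod n = b + Suc s" using Suc.prems by simp
    ultimately show ?case by simp
  qed
  have it3: "s \<le> a \<Longrightarrow> (g^^s) h = cs!s" for s
  proof (induction s)
    case 0 then show ?case using cs0 by simp
  next
    case (Suc s)
    then have "(g^^s) h = cs!s" by simp
    moreover have "g (cs!s) = cs!((s+1) mod n)" using g2[of s] Suc.prems an by simp
    moreover have "(s+1) mod n = Suc s" using Suc.prems an by simp
    ultimately show ?case by simp
  qed
  have hn: "cs!((n-1+1) mod n) = h" by (simp only: e1) (simp add: cs0)
  have gt: "g t = h"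
  proof -
    have "g (cs!(n-1)) = cs!((n-1+1) mod n)" using g2[of "n-1"] n2 an by simp
    then show ?thesis using hn csn' by simp
  qed
  have vt: "(g^^(n-1-b)) v = t" using it2[of "n-1-b"] b csn' by simp
  have uv: "(g^^(l-1)) u = v" using it1[of "l-1"] ql l2 by simp
  have ut: "(g^^((n-1-b)+(l-1))) u = t" using funpow_trans[OF uv vt] .
  have uh: "(g^^(Suc ((n-1-b)+(l-1)))) u = h" using ut gt by simp
  have hu: "(g^^a) h = u" using it3[of a] u_def by simp
  have uu: "(g^^(a + Suc ((n-1-b)+(l-1)))) u = u" using funpow_trans[OF uh hu] .
  define Os where "Os = set qs \<union> set cs"
  have g_cases: "(\<exists>i. i + 1 < l \<and> y = qs!i \<and> g y = qs!(i+1)) \<or>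
      (\<exists>r<n. r \<noteq> a \<and> y = cs!r \<and> g y = cs!((r+1) mod n))" if y: "y \<in> Os" for y
  proof (cases "y \<in> set (butlast qs)")
    case True
    obtain i where "i + 1 < length qs" "y = qs!i" using set_butlast_nth[OF True] by blast
    then show ?thesis using g1 lq by auto
  next
    case False
    have "y \<in> set cs"
    proof (cases "y \<in> set qs")
      case True
      then obtain i where i: "i < l" "y = qs!i" using lq by (auto simp: in_set_conv_nth)
      have "\<not> i + 1 < l" using nth_in_butlast[of i qs] False i lq by auto
      then have "i = l - 1" using i by simp
      then show ?thesis using ql vcs i by simp
    next
      case False then show ?thesis using y Os_def by simp
    qed
    then obtain r where r: "r < n" "y = cs!r" using n_def by (auto simp: in_set_conv_nth)
    have "r \<noteq> a"
    proof
      assume "r = a"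
      then have "y = qs!0" using r q0 u_def by simp
      then have "y \<in> set (butlast qs)" using nth_in_butlast[of 0 qs] lq l2 by simp
      then show False using False by simp
    qed
    then show ?thesis using g2 r by blast
  qed
  have g_arc: "(y, g y) \<in> arcs E M \<and> g y \<in> Os" if y: "y \<in> Os" for y
    using g_cases[OF y]
  proof (elim disjE exE conjE)
    fix i assume i: "i + 1 < l" "y = qs!i" "g y = qs!(i+1)"
    then show ?thesis using qarc[OF i(1)] lq unfolding Os_def by simp
  next
    fix r assume r: "r < n" "r \<noteq> a" "y = cs!r" "g y = cs!((r+1) mod n)"
    have "(r+1) mod n < n" using n2 by simp
    then show ?thesis using csarc[OF r(1)] r csmem unfolding Os_def by simp
  qed
  have uOs: "u \<in> Os" using ucs Os_def by simp
  have orbOs: "(g^^k) u \<in> Os" for k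
    by (induction k) (use uOs g_arc in auto)
  have gu: "g u \<noteq> u"
  proof -
    have "g u = qs!1" using g1[of 0] q0 l2 by simp
    moreover have "qs!1 \<noteq> qs!0" using qdist lq l2 nth_eq_iff_index_eq[OF qdist, of 1 0] by simp
    ultimately show ?thesis using q0 by simp
  qed
  obtain zs where zs: "zs \<noteq> []" "distinct zs" "zs!0 = u"
    "\<forall>i<length zs. zs!((i+1) mod length zs) = g (zs!i)" "length zs \<ge> 2"
    using periodic_list[OF uu] gu by auto
  have zso: "set zs = range (\<lambda>k. (g^^k) u)" using cyc_set_orbit[OF zs(4), of 0] zs by simp
  have zsOs: "set zs \<subseteq> Os" using zso orbOs by auto
  have zsdc: "dcycle E M zs"
    by (rule dcycle_intro[OF zs(2) zs(5) zs(4)]) (use zsOs g_arc in blast)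
  define D0 where "D0 = cycle_edges E zs"
  have D0g: "D0 = (\<lambda>y. edge_of E y (g y)) ` set zs" unfolding D0_def using cyc_edges_g[OF zs(4)] .
  have D0sub: "D0 \<subseteq> Cp \<union> Q"
  proof
    fix z assume "z \<in> D0"
    then obtain y where y: "y \<in> set zs" "z = edge_of E y (g y)" using D0g by blast
    then have yO: "y \<in> Os" using zsOs by blast
    from g_cases[OF yO] show "z \<in> Cp \<union> Q"
    proof (elim disjE exE conjE)
      fix i assume ii: "i + 1 < l" "y = qs!i" "g y = qs!(i+1)"
      then have "z = edge_of E (qs!i) (qs!(i+1))" using y(2) by simp
      then have "\<exists>i. i + 1 < l \<and> z = edge_of E (qs!i) (qs!(i+1))" using ii(1) by blast
      then have "z \<in> Q" by (rule iffD2[OF Qmem])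
      then show ?thesis by (rule UnI2)
    next
      fix r assume "r < n" "y = cs!r" "g y = cs!((r+1) mod n)"
      then show ?thesis using y csE by simp
    qed
  qed
  have QD0: "Q \<subseteq> D0"
  proof
    fix z assume "z \<in> Q"
    then obtain i where i: "i + 1 < l" "z = edge_of E (qs!i) (qs!(i+1))" using Qmem by blast
    have "(g^^i) u = qs!i" using it1 i by simp
    then have "qs!i \<in> range (\<lambda>k. (g^^k) u)" by (metis rangeI)
    then have "qs!i \<in> set zs" using zso by simp
    moreover have "z = edge_of E (qs!i) (g (qs!i))" using i g1 by simp
    ultimately show "z \<in> D0" using D0g by blast
  qed
  have uniq: "D = D0" if D: "is_dcycle E M D" "D \<subseteq> Cp \<union> Q" "Q \<subseteq> D" for D
  proof -
    obtain ws where ws: "dcycle E M ws" "D = cycle_edges E ws" using D(1) unfolding is_dcycle_def by blast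
    define k where "k = length ws"
    have dws: "distinct ws" using ws unfolding dcycle_def by simp
    have wsarc: "\<And>i. i < k \<Longrightarrow> (ws!i, ws!((i+1) mod k)) \<in> arcs E M" using dcycle_arc[OF ws(1)] k_def by simp
    have "0 + 1 < l" using l2 by simp
    then have "\<exists>i. i + 1 < l \<and> edge_of E (qs!0) (qs!(0+1)) = edge_of E (qs!i) (qs!(i+1))" by blast
    then have "edge_of E (qs!0) (qs!(0+1)) \<in> Q" by (rule iffD2[OF Qmem])
    then have "edge_of E u (qs!1) \<in> D" using D(3) q0 by auto
    then obtain i' where i': "i' < k" "edge_of E u (qs!1) = edge_of E (ws!i') (ws!((i'+1) mod k))"
      using cycle_edge_arc[OF ws(1)] ws(2) k_def by blast
    have wi': "ws!i' = u" "ws!((i'+1) mod k) = qs!1"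
      using arc_inj[OF qarc[of 0] wsarc[OF i'(1)]] i' l2 q0 by auto
    have nx: "\<forall>i<length ws. ws!((i+1) mod length ws) = g (ws!i)"
    proof (intro allI impI)
      fix i assume i: "i < length ws"
      then have ik: "i < k" using k_def by simp
      have ed: "edge_of E (ws!i) (ws!((i+1) mod k)) \<in> Cp \<union> Q"
        using D(2) ws(2) ik unfolding cycle_edges_def k_def by blast
      have "ws!((i+1) mod k) = g (ws!i)"
      proof (cases "edge_of E (ws!i) (ws!((i+1) mod k)) \<in> Q")
        case True
        then obtain j where j: "j + 1 < l" "edge_of E (ws!i) (ws!((i+1) mod k)) = edge_of E (qs!j) (qs!(j+1))"
          using Qmem by blast
        have "ws!i = qs!j \<and> ws!((i+1) mod k) = qs!(j+1)"
          using arc_inj[OF wsarc[OF ik] qarc[OF j(1)] j(2)] .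
        then show ?thesis using g1 j by simp
      next
        case False
        then have "edge_of E (ws!i) (ws!((i+1) mod k)) \<in> Cp" using ed by blast
        then obtain r where r: "r < n" "edge_of E (ws!i) (ws!((i+1) mod k)) = edge_of E (cs!r) (cs!((r+1) mod n))"
          using cycle_edge_arc[OF cs] Cp_def n_def by blast
        have wr: "ws!i = cs!r \<and> ws!((i+1) mod k) = cs!((r+1) mod n)"
          using arc_inj[OF wsarc[OF ik] csarc[OF r(1)] r(2)] .
        show ?thesis
        proof (cases "r = a")
          case False
          then show ?thesis using g2 r wr by simp
        next
          case True
          then have "ws!i = ws!i'" using wr wi' u_def by simp
          then have "i = i'" using nth_eq_iff_index_eq[OF dws] i i' k_def by simp
          then show ?thesis using wi' wr True g1[of 0] l2 q0 by simp
        qed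
      qed
      then show "ws!((i+1) mod length ws) = g (ws!i)" using k_def by simp
    qed
    have "set ws = range (\<lambda>k. (g^^k) (ws!i'))" using cyc_set_orbit[OF nx] i' k_def by simp
    then have "set ws = set zs" using zso wi' by simp
    then show ?thesis using ws(2) cyc_edges_g[OF nx] D0g by simp
  qed
  have PD0: "is_dcycle E M D0 \<and> D0 \<subseteq> Cp \<union> Q \<and> Q \<subseteq> D0"
    using zsdc D0sub QD0 unfolding is_dcycle_def D0_def by blast
  have CQ: "CQ E M Cp Q = D0"
    unfolding CQ_def by (rule the_equality) (use PD0 uniq in blast)+
  have eD0: "edge_of E t h \<in> D0"
  proof -
    have "t \<in> range (\<lambda>k. (g^^k) u)" using ut by (metis rangeI)
    then have "t \<in> set zs" using zso by simp
    then show ?thesis using D0g gt by (metis image_eqI)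
  qed
  define Ob where "Ob = set qs \<union> {cs!r | r. b \<le> r \<and> r < n} \<union> {cs!r | r. r \<le> a}"
  have qcs2: "y = u \<or> y = v" if y: "y \<in> set qs" "y \<in> set cs" for y
  proof -
    obtain i where i: "i < l" "y = qs!i" using y(1) lq by (auto simp: in_set_conv_nth)
    then have "i = 0 \<or> i = l - 1" using qcs y(2) by simp
    then show ?thesis using i q0 ql by auto
  qed
  have ObOs: "Ob \<subseteq> Os" unfolding Ob_def Os_def using csmem an by auto
  have Obcl: "g y \<in> Ob" if y: "y \<in> Ob" for y
  proof -
    have yO: "y \<in> Os" using y ObOs by blast
    from g_cases[OF yO] show ?thesis
    proof (elim disjE exE conjE)
      fix i assume "i + 1 < l" "y = qs!i" "g y = qs!(i+1)"
      then show ?thesis unfolding Ob_def using lq by simp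
    next
      fix r assume r: "r < n" "r \<noteq> a" "y = cs!r" "g y = cs!((r+1) mod n)"
      have "b \<le> r \<or> r < a"
      proof -
        have "y \<in> set qs \<or> (\<exists>r'. y = cs!r' \<and> b \<le> r' \<and> r' < n) \<or> (\<exists>r'. y = cs!r' \<and> r' \<le> a)"
          using y unfolding Ob_def by blast
        then show ?thesis
        proof (elim disjE exE conjE)
          assume "y \<in> set qs"
          then have "y = u \<or> y = v" using qcs2 r csmem by simp
          then have "cs!r = cs!a \<or> cs!r = cs!b" using r u_def v_def by simp
          then have "r = a \<or> r = b" using csinj r(1) an b(1) by (metis less_imp_le_nat Suc_eq_plus1 Suc_le_lessD)
          then show ?thesis using r(2) by simp
        next
          fix r' assume "y = cs!r'" "b \<le> r'" "r' < n"
          then have "r = r'" using csinj r by simp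
          then show ?thesis using \<open>b \<le> r'\<close> by simp
        next
          fix r' assume "y = cs!r'" "r' \<le> a"
          then have "r = r'" using csinj r an by simp
          then show ?thesis using \<open>r' \<le> a\<close> r(2) by simp
        qed
      qed
      then show ?thesis
      proof
        assume br: "b \<le> r"
        show ?thesis
        proof (cases "r + 1 < n")
          case True
          then have "g y = cs!(r+1)" using r by simp
          then show ?thesis unfolding Ob_def using True br by auto
        next
          case False
          then have "r + 1 = n" using r by simp
          then have "g y = cs!0" using r by simp
          then show ?thesis unfolding Ob_def by auto
        qed
      next
        assume ra: "r < a"
        then have "g y = cs!(r+1)" using r an by simp
        then show ?thesis unfolding Ob_def using ra by auto
      qed
    qed
  qed
  have uOb: "u \<in> Ob" unfolding Ob_def u_def by auto
  have orbOb: "(g^^k) u \<in> Ob" for k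
    by (induction k) (use uOb Obcl in auto)
  have xD0: "x \<notin> D0"
  proof
    assume "x \<in> D0"
    then obtain y where y: "y \<in> set zs" "x = edge_of E y (g y)" using D0g by blast
    have yOb: "y \<in> Ob" using y(1) zso orbOb by auto
    have yarc: "(y, g y) \<in> arcs E M" using g_arc yOb ObOs by blast
    have parc: "(cs!p, cs!(p+1)) \<in> arcs E M" using csarc[OF p(1)] pn by simp
    have "edge_of E y (g y) = edge_of E (cs!p) (cs!(p+1))" using y(2) xp by simp
    then have yp: "y = cs!p \<and> g y = cs!(p+1)" by (rule arc_inj[OF yarc parc])
    have "p = a"
    proof -
      have "y \<in> set qs \<or> (\<exists>r'. y = cs!r' \<and> b \<le> r' \<and> r' < n) \<or> (\<exists>r'. y = cs!r' \<and> r' \<le> a)"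
        using yOb unfolding Ob_def by blast
      then show ?thesis
      proof (elim disjE exE conjE)
        assume "y \<in> set qs"
        then have "y = u \<or> y = v" using qcs2 yp csmem p(1) by simp
        then have "cs!p = cs!a \<or> cs!p = cs!b" using yp u_def v_def by simp
        then have "p = a \<or> p = b" using csinj p(1) an b(1) by (metis less_imp_le_nat Suc_eq_plus1 Suc_le_lessD)
        then show ?thesis using pb by auto
      next
        fix r' assume "y = cs!r'" "b \<le> r'" "r' < n"
        then have "p = r'" using csinj yp p(1) by simp
        then show ?thesis using \<open>b \<le> r'\<close> pb by simp
      next
        fix r' assume "y = cs!r'" "r' \<le> a"
        then have "p = r'" using csinj yp p(1) an by simp
        then show ?thesis using \<open>r' \<le> a\<close> a by simp
      qed
    qed
    then have "y = qs!0" using yp q0 u_def by simp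
    then have "x = edge_of E (qs!0) (qs!(0+1))" using y(2) g1[of 0] l2 by simp
    moreover have "0 + 1 < l" using l2 by simp
    ultimately have "\<exists>i. i + 1 < l \<and> x = edge_of E (qs!i) (qs!(i+1))" by blast
    then have "x \<in> Q" by (rule iffD2[OF Qmem])
    moreover have "x \<in> Cp" using x Cp_def by simp
    ultimately show False using QCp by blast
  qed
  show ?thesis using jump xD0 eD0 CQ unfolding Cp_def C_def by blast
qed

end


context bgm
begin

lemma rot_to:
  assumes zs: "dcycle E M zs" and th: "(t,h) \<in> arcs E M" and e: "edge_of E t h \<in> cycle_edges E zs"
  shows "\<exists>zs'. dcycle E M zs' \<and> cycle_edges E zs' = cycle_edges E zs \<and> zs'!0 = h \<and> zs'!(length zs' - 1) = t"
proof -
  define n where "n = length zs"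
  have n2: "n \<ge> 2" using zs unfolding dcycle_def n_def by simp
  obtain i where i: "i < n" "edge_of E t h = edge_of E (zs!i) (zs!((i+1) mod n))"
    using cycle_edge_arc[OF zs e] n_def by blast
  have "t = zs!i \<and> h = zs!((i+1) mod n)"
    using arc_inj[OF th dcycle_arc[OF zs i(1)[unfolded n_def]]] i(2) n_def by simp
  then have ti: "zs!i = t" and hi: "zs!((i+1) mod n) = h" by auto
  define zs' where "zs' = rotate (i+1) zs"
  have len: "length zs' = n" unfolding zs'_def n_def by simp
  have r: "\<And>j. j < n \<Longrightarrow> zs'!j = zs!((i + 1 + j) mod n)" unfolding zs'_def n_def using nth_rotate by blast
  have z0: "zs'!0 = h" using r[of 0] n2 hi by simp
  have "zs'!(n-1) = zs!((i + 1 + (n-1)) mod n)" using r[of "n-1"] n2 by simp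
  also have "i + 1 + (n-1) = i + n" using n2 by simp
  also have "zs!((i + n) mod n) = t" using ti i(1) by simp
  finally have zn: "zs'!(length zs' - 1) = t" using len by simp
  have "dcycle E M zs'" unfolding zs'_def by (rule rotate_dcycle[OF zs])
  moreover have "cycle_edges E zs' = cycle_edges E zs" unfolding zs'_def
    by (rule rotate_cycle_edges) (use n2 n_def in linarith)
  ultimately show ?thesis using z0 zn by blast
qed

lemma interjump_cover:
  assumes cs: "dcycle E M cs" and fC: "finite C" and y: "y \<in> C" "y \<in> cycle_edges E cs"
  shows "\<exists>P \<in> interjumps E M (cycle_edges E cs) C. y \<in> P"
proof -
  define Cp where "Cp = cycle_edges E cs"
  obtain i where i: "i < length cs" "y = edge_of E (cs!i) (cs!((i+1) mod length cs))"
    using cycle_edge_arc[OF cs y(2)] by blast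
  define u where "u = cs!i"
  define w where "w = cs!((i+1) mod length cs)"
  have arc: "(u,w) \<in> arcs E M" using dcycle_arc[OF cs i(1)] u_def w_def by simp
  have uw: "u \<noteq> w" using arc_neq[OF arc] .
  have dp: "dpath E M [u,w]" unfolding dpath_def using arc uw by (simp add: less_Suc_eq)
  have pe: "path_edges E [u,w] = {y}"
  proof -
    have "{i'. i' + 1 < length [u,w]} = {0}" by auto
    then have "path_edges E [u,w] = {edge_of E ([u,w]!0) ([u,w]!(0+1))}" unfolding path_edges_def by auto
    then show ?thesis using i u_def w_def by simp
  qed
  define Phi where "Phi = {P. (\<exists>vs. dpath E M vs \<and> P = path_edges E vs) \<and> P \<subseteq> C \<inter> Cp \<and> y \<in> P}"
  have "{y} \<subseteq> C \<inter> Cp" using y Cp_def by simp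
  then have "{y} \<in> Phi" unfolding Phi_def using dp pe by blast
  then have ne: "Phi \<noteq> {}" by blast
  have fin: "finite Phi"
  proof (rule finite_subset)
    show "Phi \<subseteq> Pow (C \<inter> Cp)" unfolding Phi_def by blast
    show "finite (Pow (C \<inter> Cp))" using fC by simp
  qed
  obtain P where P: "P \<in> Phi" "\<And>b. b \<in> Phi \<Longrightarrow> P \<subseteq> b \<Longrightarrow> P = b"
    using finite_has_maximal[OF fin ne] by blast
  have "P \<in> interjumps E M Cp C"
    unfolding interjumps_def
  proof (intro CollectI conjI)
    show "\<exists>vs. dpath E M vs \<and> P = path_edges E vs" using P(1) unfolding Phi_def by blast
    show "P \<subseteq> C \<inter> Cp" using P(1) unfolding Phi_def by blast
    show "\<not> (\<exists>ws. dpath E M ws \<and> path_edges E ws \<subseteq> C \<inter> Cp \<and> P \<subset> path_edges E ws)"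
    proof
      assume "\<exists>ws. dpath E M ws \<and> path_edges E ws \<subseteq> C \<inter> Cp \<and> P \<subset> path_edges E ws"
      then obtain ws where ws: "dpath E M ws" "path_edges E ws \<subseteq> C \<inter> Cp" "P \<subset> path_edges E ws" by blast
      have "y \<in> P" using P(1) unfolding Phi_def by blast
      then have "path_edges E ws \<in> Phi" unfolding Phi_def using ws by blast
      then have "P = path_edges E ws" using P(2) ws(3) by blast
      then show False using ws(3) by simp
    qed
  qed
  moreover have "y \<in> P" using P(1) unfolding Phi_def by blast
  ultimately show ?thesis unfolding Cp_def by blast
qed

end

theorem lemma6:
  fixes A B :: "'v set" and E R M Mstar :: "'v edge set" and k :: nat
    and Me :: "'v edge \<Rightarrow> 'v edge set" and e :: "'v edge"
  assumes Me: "\<forall>f \<in> E. is_min_red_pm A B E R f (Me f)"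
    and crit: "critical A B E R k Mstar M Me"
    and e: "e \<in> Eplus R M (Cplus E R M Mstar)"
    and nb: "e \<notin> reach_back E R M (Cplus E R M Mstar) (Ce E M Me e)"
  shows "\<exists>QQ. (\<forall>Q \<in> QQ. is_jump E M (Cplus E R M Mstar) (Ce E M Me e) Q
                     \<and> forward_jump E R M (Cplus E R M Mstar) Q)
            \<and> Cplus E R M Mstar = (\<Union>Q \<in> QQ. reach E R M (Cplus E R M Mstar) Q)
                 \<union> \<Union> (interjumps E M (Cplus E R M Mstar) (Ce E M Me e))
            \<and> (\<forall>Q \<in> QQ. e \<notin> reach E R M (Cplus E R M Mstar) Q)"
proof -
  have cr: "bip_graph A B E R" "perfect_matching A B E Mstar" "perfect_matching A B E M"
    "card (red R Mstar) = k" "3 * card (red R M) < k"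
    "\<And>C. is_dcycle E M C \<Longrightarrow> wM R M C > 0 \<Longrightarrow> 3 * card (Eplus R M C) > 2 * k"
    using crit unfolding critical_def by auto
  interpret bgm A B E R M by unfold_locales (use cr in auto)
  interpret S1: sdm A B E R M Mstar by unfold_locales (use cr in auto)
  define P1 where "P1 C \<longleftrightarrow> is_dcycle E M C \<and> C \<subseteq> symdiff M Mstar \<and> wM R M C > 0" for C
  have ex1: "\<exists>C. P1 C"
    using S1.exists_pos_cycle cr(4,5) unfolding P1_def S1.Sd_def by simp
  have un1: "C1 = C2" if c1: "P1 C1" and c2: "P1 C2" for C1 C2
  proof -
    obtain zs1 where z1: "dcycle E M zs1" "C1 = cycle_edges E zs1" using c1 unfolding P1_def is_dcycle_def by blast
    obtain zs2 where z2: "dcycle E M zs2" "C2 = cycle_edges E zs2" using c2 unfolding P1_def is_dcycle_def by blast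
    have s1: "cycle_edges E zs1 \<subseteq> S1.Sd" and s2: "cycle_edges E zs2 \<subseteq> S1.Sd"
      using c1 c2 z1 z2 unfolding P1_def S1.Sd_def by auto
    show ?thesis
    proof (cases "set zs1 \<inter> set zs2 = {}")
      case False
      then obtain y where y: "y \<in> set zs1" "y \<in> set zs2" by blast
      show ?thesis using S1.cycle_in_Sd_edges[OF z1(1) s1 y(1)] S1.cycle_in_Sd_edges[OF z2(1) s2 y(2)] z1 z2 by simp
    next
      case True
      have dj: "C1 \<inter> C2 = {}"
      proof (rule ccontr)
        assume "C1 \<inter> C2 \<noteq> {}"
        then obtain z where z: "z \<in> C1" "z \<in> C2" by blast
        obtain i where i: "i < length zs1" "z = edge_of E (zs1!i) (zs1!((i+1) mod length zs1))"
          using cycle_edge_arc[OF z1(1)] z z1 by blast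
        have "zs1!i \<in> verts C1" "zs1!i \<in> verts C2" using edge_of_verts z i by metis+
        then show False using True cycle_verts z1 z2 by auto
      qed
      have fM: "finite Mstar" using pm_sub[OF cr(2)] finE finite_subset by blast
      have sub: "Eplus R M C1 \<union> Eplus R M C2 \<subseteq> red R Mstar"
        using s1 s2 z1 z2 unfolding Eplus_def red_def S1.Sd_def symdiff_def by auto
      have "card (Eplus R M C1) + card (Eplus R M C2) = card (Eplus R M C1 \<union> Eplus R M C2)"
        by (rule card_Un_disjoint[symmetric]) (use dj z1 z2 finite_cycle_edges in \<open>auto simp: Eplus_def\<close>)
      also have "\<dots> \<le> k" using card_mono[OF _ sub] fM cr(4) unfolding red_def by simp
      finally have le: "card (Eplus R M C1) + card (Eplus R M C2) \<le> k" .
      have "3 * card (Eplus R M C1) > 2 * k" "3 * card (Eplus R M C2) > 2 * k"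
        using cr(6) c1 c2 unfolding P1_def by auto
      then show ?thesis using le by simp
    qed
  qed
  define Cp where "Cp = Cplus E R M Mstar"
  have PCp: "P1 Cp" unfolding Cp_def Cplus_def P1_def[symmetric]
    by (rule theI') (use ex1 un1 in blast)
  obtain cs0 where cs0: "dcycle E M cs0" "Cp = cycle_edges E cs0" using PCp unfolding P1_def is_dcycle_def by blast
  have eCp: "e \<in> Cp" and eM: "e \<notin> M" using e unfolding Cp_def Eplus_def by auto
  have eE: "e \<in> E" using eCp cs0 cycle_edges_E by blast
  obtain ea eb where eab: "e = (ea, eb)" by (cases e)
  have th: "(eb, ea) \<in> arcs E M" using eE eM eab unfolding arcs_def by auto
  have "ea \<in> A" using eE eab EAB by auto
  then have "ea \<notin> B" using disj by auto
  then have eth: "edge_of E eb ea = e" using arc_cases[OF th] eab eM by auto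
  have Mee: "is_min_red_pm A B E R e (Me e)" using Me eE by blast
  have pmMe: "perfect_matching A B E (Me e)" and eMe: "e \<in> Me e" using Mee unfolding is_min_red_pm_def by auto
  interpret S2: sdm A B E R M "Me e" by unfold_locales (use pmMe in auto)
  define P2 where "P2 C \<longleftrightarrow> is_dcycle E M C \<and> C \<subseteq> symdiff M (Me e) \<and> e \<in> C" for C
  have eSd: "e \<in> S2.Sd" using eMe eM unfolding S2.Sd_def symdiff_def by auto
  have Fe: "S2.F eb ea" unfolding S2.F_def using th eth eSd by simp
  have ebV: "eb \<in> S2.VS" using S2.F_V[OF Fe] by simp
  have ex2: "\<exists>C. P2 C"
  proof -
    obtain zs where zs: "dcycle E M zs" "eb \<in> set zs" "cycle_edges E zs = S2.edgesf (set zs)" "set zs \<subseteq> S2.VS"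
      using S2.orbit_cycle[OF ebV] by blast
    have "e = edge_of E eb (S2.fn eb)" using S2.f_eq[OF Fe] eth by simp
    then have "e \<in> S2.edgesf (set zs)" unfolding S2.edgesf_def using zs(2) by (rule image_eqI)
    then have "e \<in> cycle_edges E zs" using zs(3) by simp
    moreover have "cycle_edges E zs \<subseteq> symdiff M (Me e)"
    proof
      fix z assume "z \<in> cycle_edges E zs"
      then obtain y where y: "y \<in> set zs" "z = edge_of E y (S2.fn y)" using zs(3) unfolding S2.edgesf_def by blast
      have "S2.F y (S2.fn y)" using S2.f_F zs(4) y(1) by blast
      then show "z \<in> symdiff M (Me e)" using y(2) unfolding S2.F_def S2.Sd_def by simp
    qed
    ultimately show ?thesis using zs(1) unfolding P2_def is_dcycle_def by blast
  qed
  have un2: "C1 = C2" if c1: "P2 C1" and c2: "P2 C2" for C1 C2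
  proof -
    obtain zs1 where z1: "dcycle E M zs1" "C1 = cycle_edges E zs1" using c1 unfolding P2_def is_dcycle_def by blast
    obtain zs2 where z2: "dcycle E M zs2" "C2 = cycle_edges E zs2" using c2 unfolding P2_def is_dcycle_def by blast
    have s1: "cycle_edges E zs1 \<subseteq> S2.Sd" using c1 z1(2) unfolding P2_def S2.Sd_def by simp
    have s2: "cycle_edges E zs2 \<subseteq> S2.Sd" using c2 z2(2) unfolding P2_def S2.Sd_def by simp
    have e1: "edge_of E eb ea \<in> C1" using c1 eth unfolding P2_def by simp
    have e2: "edge_of E eb ea \<in> C2" using c2 eth unfolding P2_def by simp
    have "eb \<in> verts C1" using edge_of_verts[OF e1] by simp
    then have y1: "eb \<in> set zs1" using cycle_verts[OF z1(1)] z1(2) by simp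
    have "eb \<in> verts C2" using edge_of_verts[OF e2] by simp
    then have y2: "eb \<in> set zs2" using cycle_verts[OF z2(1)] z2(2) by simp
    note y = y1 y2
    show ?thesis using S2.cycle_in_Sd_edges[OF z1(1) s1 y(1)] S2.cycle_in_Sd_edges[OF z2(1) s2 y(2)] z1 z2 by simp
  qed
  define C where "C = Ce E M Me e"
  have PC: "P2 C" unfolding C_def Ce_def P2_def[symmetric]
    by (rule theI') (use ex2 un2 in blast)
  obtain ds0 where ds0: "dcycle E M ds0" "C = cycle_edges E ds0" using PC unfolding P2_def is_dcycle_def by blast
  have eC: "e \<in> C" using PC unfolding P2_def by simp
  obtain cs where cs: "dcycle E M cs" "cycle_edges E cs = Cp" "cs!0 = ea" "cs!(length cs - 1) = eb"
    using rot_to[OF cs0(1) th] eth eCp cs0(2) by metis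
  obtain ds where ds: "dcycle E M ds" "cycle_edges E ds = C" "ds!0 = ea" "ds!(length ds - 1) = eb"
    using rot_to[OF ds0(1) th] eth eC ds0(2) by metis
  define QQ where "QQ = {Q. is_jump E M Cp C Q \<and> forward_jump E R M Cp Q \<and> e \<notin> reach E R M Cp Q}"
  have cover: "Cp \<subseteq> (\<Union>Q \<in> QQ. reach E R M Cp Q) \<union> \<Union> (interjumps E M Cp C)"
  proof
    fix x assume x: "x \<in> Cp"
    show "x \<in> (\<Union>Q \<in> QQ. reach E R M Cp Q) \<union> \<Union> (interjumps E M Cp C)"
    proof (cases "x \<in> C")
      case True
      have "finite C" using ds0 finite_cycle_edges by simp
      then obtain P where "P \<in> interjumps E M Cp C" "x \<in> P"
        using interjump_cover[OF cs(1)] True x cs(2) by blast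
      then show ?thesis by blast
    next
      case False
      obtain Q where Q: "is_jump E M Cp C Q" "x \<notin> CQ E M Cp Q" "edge_of E eb ea \<in> CQ E M Cp Q"
        using core[OF cs(1) ds(1) cs(3) cs(4) ds(3) ds(4)] x False cs(2) ds(2) by blast
      have QCp: "Q \<inter> Cp = {}" using Q(1) unfolding is_jump_def by blast
      have eCQ: "e \<in> CQ E M Cp Q" using Q(3) eth by simp
      have fw: "forward_jump E R M Cp Q"
      proof (rule ccontr)
        assume nf: "\<not> forward_jump E R M Cp Q"
        have "e \<in> reach E R M Cp Q" unfolding reach_def using nf eCQ eCp QCp by auto
        then have "e \<in> reach_back E R M Cp C" unfolding reach_back_def using Q(1) nf by blast
        then show False using nb unfolding Cp_def C_def by simp
      qed
      have "x \<in> reach E R M Cp Q" "e \<notin> reach E R M Cp Q" unfolding reach_def using fw x Q(2) eCQ by auto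
      then have "Q \<in> QQ" "x \<in> reach E R M Cp Q" unfolding QQ_def using Q(1) fw by auto
      then show ?thesis by blast
    qed
  qed
  have bk: "(\<Union>Q \<in> QQ. reach E R M Cp Q) \<union> \<Union> (interjumps E M Cp C) \<subseteq> Cp"
    unfolding QQ_def reach_def interjumps_def by auto
  have "(\<forall>Q \<in> QQ. is_jump E M Cp C Q \<and> forward_jump E R M Cp Q)
        \<and> Cp = (\<Union>Q \<in> QQ. reach E R M Cp Q) \<union> \<Union> (interjumps E M Cp C)
        \<and> (\<forall>Q \<in> QQ. e \<notin> reach E R M Cp Q)"
    using cover bk unfolding QQ_def by blast
  then show ?thesis unfolding Cp_def C_def by blast
qed


end
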